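(* Let $(V,\|\cdot\|)$ be a normed plane and $x,y\in V$ distinct. The segment $[xy]$ is not parallel to any nondegenerate segment contained in the unit circle $S$ if and only if for every $z\in\mathrm{bis}(x,y)\setminus[xy]$, the bisector $\mathrm{bis}(x,y)$ is contained in $C_z\cup(2z-C_z)$, where $C_z=\mathrm{conv}\big([zx\rangle\cup[zy\rangle\big)$ and $2z-C_z=\{2z-v:v\in C_z\}$ is the image of $C_z$ under the point reflection through $z$.
   Context: A normed (Minkowski) plane $(V,\|\cdot\|)$ is a two-dimensional real vector space with a norm; $S=\{v:\|v\|=1\}$ is its unit circle. For $x,y\in V$, $[xy]$ denotes the closed segment and $[xy\rangle$ the closed half-line starting at $x$ and passing through $y$. For distinct $x,y\in V$ the bisector is $\mathrm{bis}(x,y)=\{z\in V:\|z-x\|=\|z-y\|\}$. *)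

theory Defs
  imports "HOL-Analysis.Analysis"
begin

definition halfline :: "'a::real_vector \<Rightarrow> 'a \<Rightarrow> 'a set" where
  "halfline x y = {x + t *\<^sub>R (y - x) | t. t \<ge> 0}"

definition bis :: "'a::real_normed_vector \<Rightarrow> 'a \<Rightarrow> 'a set" where
  "bis x y = {z. norm (z - x) = norm (z - y)}"

definition unit_circle :: "'a::real_normed_vector set" where
  "unit_circle = {v. norm v = 1}"

definition cone_at :: "'a::real_vector \<Rightarrow> 'a \<Rightarrow> 'a \<Rightarrow> 'a set" where
  "cone_at z x y = convex hull (halfline z x \<union> halfline z y)"

definition seg_parallel :: "'a::real_vector \<Rightarrow> 'a \<Rightarrow> 'a \<Rightarrow> 'a \<Rightarrow> bool" where
  "seg_parallel a b c d \<longleftrightarrow> (\<exists>t. b - a = t *\<^sub>R (d - c))"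

end

theory Submission
  imports Defs
begin

lemma indep2:
  fixes x y z :: "'a::real_normed_vector"
  assumes "x \<noteq> y" "norm (z - x) = norm (z - y)" "z \<notin> closed_segment x y"
    and "a *\<^sub>R (x - z) + b *\<^sub>R (y - z) = 0"
  shows "a = 0 \<and> b = 0"
proof (cases "a + b = 0")
  case True
  then have "b = -a" by simp
  with assms(4) have "a *\<^sub>R (x - y) = 0" by (simp add: algebra_simps)
  with assms(1) show ?thesis using \<open>b = -a\<close> by simp
next
  case False
  define s where "s = b / (a + b)"
  have "(a + b) *\<^sub>R z = a *\<^sub>R x + b *\<^sub>R y" using assms(4) by (simp add: algebra_simps)
  then have zeq: "z = (1 - s) *\<^sub>R x + s *\<^sub>R y"
  proof -
    have "z = (1 / (a + b)) *\<^sub>R ((a + b) *\<^sub>R z)" using False by simp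
    also have "\<dots> = (a / (a + b)) *\<^sub>R x + (b / (a + b)) *\<^sub>R y"
      using \<open>(a + b) *\<^sub>R z = a *\<^sub>R x + b *\<^sub>R y\<close> by (simp add: scaleR_right_distrib)
    also have "a / (a + b) = 1 - s" using False unfolding s_def by (simp add: field_simps)
    finally show ?thesis by (simp add: s_def)
  qed
  have "z - x = s *\<^sub>R (y - x)" using zeq by (simp add: algebra_simps)
  moreover have "z - y = (1 - s) *\<^sub>R (x - y)" using zeq by (simp add: algebra_simps)
  ultimately have "\<bar>s\<bar> * norm (y - x) = \<bar>1 - s\<bar> * norm (x - y)" using assms(2) by simp
  then have "\<bar>s\<bar> = \<bar>1 - s\<bar>" using assms(1) by (simp add: norm_minus_commute)
  then have "s = 1/2" by auto
  then have "z \<in> closed_segment x y" using zeq unfolding closed_segment_def by auto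
  with assms(3) show ?thesis by simp
qed

lemma key:
  fixes a d :: "'a::real_normed_vector"
  assumes d0: "d \<noteq> 0" and t0: "t > 0" and e: "norm a = norm (a - d)"
    and le: "norm (a + t *\<^sub>R d) \<le> norm (a + (t - 1) *\<^sub>R d)"
  shows "\<exists>p q. p \<noteq> q \<and> closed_segment p q \<subseteq> {v. norm v = 1} \<and> (\<exists>\<tau>. d = \<tau> *\<^sub>R (q - p))"
proof -
  define c where "c = norm a"
  define A where "A = norm (a + t *\<^sub>R d)"
  define B where "B = norm (a + (t - 1) *\<^sub>R d)"
  have "(t + 1) *\<^sub>R a = t *\<^sub>R (a - d) + (a + t *\<^sub>R d)" by (simp add: algebra_simps)
  then have "norm ((t + 1) *\<^sub>R a) \<le> norm (t *\<^sub>R (a - d)) + norm (a + t *\<^sub>R d)"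
    by (metis norm_triangle_ineq)
  then have "(t + 1) * c \<le> t * c + A"
    using t0 e unfolding c_def A_def by simp
  then have cA: "c \<le> A" by (simp add: distrib_right)
  have "(t + 1) *\<^sub>R (a + (t - 1) *\<^sub>R d) = (a - d) + t *\<^sub>R (a + t *\<^sub>R d)" by (simp add: algebra_simps)
  then have "norm ((t + 1) *\<^sub>R (a + (t - 1) *\<^sub>R d)) \<le> norm (a - d) + norm (t *\<^sub>R (a + t *\<^sub>R d))"
    by (metis norm_triangle_ineq)
  then have "(t + 1) * B \<le> c + t * A"
    using t0 e unfolding c_def A_def B_def by simp
  moreover have "t * A \<le> t * B" using le t0 unfolding A_def B_def by simp
  ultimately have "B \<le> c" by (simp add: distrib_right)
  have AB: "A \<le> B" using le unfolding A_def B_def .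
  have cpos: "c > 0"
  proof (rule ccontr)
    assume "\<not> c > 0"
    then have "a = 0" unfolding c_def by simp
    then have "d = 0" using e by simp
    with d0 show False by simp
  qed
  have seg: "norm (a - s *\<^sub>R d) = c" if s: "0 \<le> s" "s \<le> 1" for s
  proof -
    have "a - s *\<^sub>R d = (1 - s) *\<^sub>R a + s *\<^sub>R (a - d)" by (simp add: algebra_simps)
    then have "norm (a - s *\<^sub>R d) \<le> norm ((1 - s) *\<^sub>R a) + norm (s *\<^sub>R (a - d))"
      by (metis norm_triangle_ineq)
    then have "norm (a - s *\<^sub>R d) \<le> (1 - s) * c + s * c"
      using s e unfolding c_def by simp
    then have up: "norm (a - s *\<^sub>R d) \<le> c" by (simp add: algebra_simps)
    have "(s + t) *\<^sub>R a = t *\<^sub>R (a - s *\<^sub>R d) + s *\<^sub>R (a + t *\<^sub>R d)" by (simp add: algebra_simps)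
    then have "norm ((s + t) *\<^sub>R a) \<le> norm (t *\<^sub>R (a - s *\<^sub>R d)) + norm (s *\<^sub>R (a + t *\<^sub>R d))"
      by (metis norm_triangle_ineq)
    then have "(s + t) * c \<le> t * norm (a - s *\<^sub>R d) + s * A"
      using s t0 unfolding c_def A_def by simp
    moreover have "A = c" using cA AB \<open>B \<le> c\<close> by simp
    ultimately have "t * c \<le> t * norm (a - s *\<^sub>R d)" by (simp add: distrib_right)
    then have "c \<le> norm (a - s *\<^sub>R d)" using t0 by simp
    with up show ?thesis by simp
  qed
  define p where "p = (1 / c) *\<^sub>R (a - d)"
  define q where "q = (1 / c) *\<^sub>R a"
  have "p \<noteq> q" using d0 cpos unfolding p_def q_def by simp
  moreover have "closed_segment p q \<subseteq> {v. norm v = 1}"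
  proof
    fix w assume "w \<in> closed_segment p q"
    then obtain u where u: "0 \<le> u" "u \<le> 1" "w = (1 - u) *\<^sub>R p + u *\<^sub>R q"
      unfolding closed_segment_def by auto
    have "w = (1 / c) *\<^sub>R ((1 - u) *\<^sub>R (a - d) + u *\<^sub>R a)" using u(3) unfolding p_def q_def
      by (simp add: scaleR_right_distrib)
    also have "(1 - u) *\<^sub>R (a - d) + u *\<^sub>R a = a - (1 - u) *\<^sub>R d" by (simp add: algebra_simps)
    finally have "w = (1 / c) *\<^sub>R (a - (1 - u) *\<^sub>R d)" .
    then have "norm w = (1 / c) * norm (a - (1 - u) *\<^sub>R d)" using cpos by simp
    also have "\<dots> = 1" using seg[of "1 - u"] u cpos by simp
    finally show "w \<in> {v. norm v = 1}" by simp
  qed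
  moreover have "d = c *\<^sub>R (q - p)" using cpos unfolding p_def q_def by (simp add: algebra_simps)
  ultimately show ?thesis by blast
qed


lemma mid2:
  fixes x y z :: "'a::real_normed_vector"
  assumes "x \<noteq> y" "z \<in> closed_segment x y" "norm (z - x) = norm (z - y)"
  shows "z - x = (1/2) *\<^sub>R (y - x)"
proof -
  obtain s where s: "0 \<le> s" "s \<le> 1" "z = (1 - s) *\<^sub>R x + s *\<^sub>R y"
    using assms(2) unfolding closed_segment_def by auto
  have zx: "z - x = s *\<^sub>R (y - x)" using s(3) by (simp add: algebra_simps)
  moreover have "z - y = (1 - s) *\<^sub>R (x - y)" using s(3) by (simp add: algebra_simps)
  ultimately have "\<bar>s\<bar> * norm (y - x) = \<bar>1 - s\<bar> * norm (x - y)" using assms(3) by simp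
  then have "\<bar>s\<bar> = \<bar>1 - s\<bar>" using assms(1) by (simp add: norm_minus_commute)
  then have "s = 1/2" by auto
  then show ?thesis using zx by simp
qed

lemma bad:
  fixes x y z v :: "'a::real_normed_vector"
  assumes xy: "x \<noteq> y" and zb: "norm (z - x) = norm (z - y)" and vb: "norm (v - x) = norm (v - y)"
    and veq: "v = z + \<alpha> *\<^sub>R (x - z) + \<beta> *\<^sub>R (y - z)" and ap: "\<alpha> > 0" and bn: "\<beta> < 0"
  shows "\<exists>a b. a \<noteq> b \<and> closed_segment a b \<subseteq> unit_circle \<and> seg_parallel x y a b"
proof -
  define e1 where "e1 = x - z"
  define e2 where "e2 = y - z"
  define r where "r = norm e1"
  have r2: "norm e2 = r" using zb unfolding r_def e1_def e2_def by (simp add: norm_minus_commute)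
  have d0: "y - x \<noteq> 0" using xy by simp
  have e: "norm (v - x) = norm ((v - x) - (y - x))" using vb by simp
  have r0: "r \<ge> 0" unfolding r_def by simp
  have ex: "\<exists>p q. p \<noteq> q \<and> closed_segment p q \<subseteq> {v. norm v = 1} \<and> (\<exists>\<tau>. y - x = \<tau> *\<^sub>R (q - p))"
  proof (cases "\<alpha> + \<beta> \<ge> 0")
    case True
    define s where "s = \<alpha> + \<beta>"
    have s0: "s \<ge> 0" using True s_def by simp
    have v1: "(v - x) + (-\<beta>) *\<^sub>R (y - x) = (s - 1) *\<^sub>R e1"
      using veq unfolding e1_def s_def by (simp add: algebra_simps)
    have v2: "(v - x) + (-\<beta> - 1) *\<^sub>R (y - x) = s *\<^sub>R e1 - e2"
      using veq unfolding e1_def e2_def s_def by (simp add: algebra_simps)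
    have "\<bar>norm (s *\<^sub>R e1) - norm e2\<bar> \<le> norm (s *\<^sub>R e1 - e2)" by (rule norm_triangle_ineq3)
    moreover have "\<bar>norm (s *\<^sub>R e1) - norm e2\<bar> = \<bar>s - 1\<bar> * r"
    proof -
      have "norm (s *\<^sub>R e1) - norm e2 = (s - 1) * r" using s0 r2 unfolding r_def by (simp add: algebra_simps)
      then show ?thesis using r0 by (simp add: abs_mult)
    qed
    ultimately have "norm ((s - 1) *\<^sub>R e1) \<le> norm (s *\<^sub>R e1 - e2)" unfolding r_def by simp
    then have "norm ((v - x) + (-\<beta>) *\<^sub>R (y - x)) \<le> norm ((v - x) + (-\<beta> - 1) *\<^sub>R (y - x))"
      using v1 v2 by simp
    then show ?thesis using key[OF d0 _ e, of "-\<beta>"] bn by simp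
  next
    case False
    define s where "s = \<alpha> + \<beta>"
    have s0: "s < 0" using False s_def by simp
    have v1: "(v - x) + \<alpha> *\<^sub>R (y - x) = s *\<^sub>R e2 - e1"
      using veq unfolding e1_def e2_def s_def by (simp add: algebra_simps)
    have v2: "(v - x) + (\<alpha> - 1) *\<^sub>R (y - x) = (s - 1) *\<^sub>R e2"
      using veq unfolding e1_def e2_def s_def by (simp add: algebra_simps)
    have "norm (s *\<^sub>R e2 - e1) \<le> norm (s *\<^sub>R e2) + norm e1" by (rule norm_triangle_ineq4)
    also have "\<dots> = (1 - s) * r" using s0 r2 unfolding r_def by (simp add: algebra_simps)
    also have "\<dots> = norm ((s - 1) *\<^sub>R e2)" using s0 r2 by simp
    finally have "norm ((v - x) + \<alpha> *\<^sub>R (y - x)) \<le> norm ((v - x) + (\<alpha> - 1) *\<^sub>R (y - x))"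
      using v1 v2 by simp
    then show ?thesis using key[OF d0 _ e, of "\<alpha>"] ap by simp
  qed
  then show ?thesis unfolding unit_circle_def seg_parallel_def by auto
qed

lemma cone_in:
  fixes x y z :: "'a::real_vector"
  assumes "\<alpha> \<ge> 0" "\<beta> \<ge> 0"
  shows "z + \<alpha> *\<^sub>R (x - z) + \<beta> *\<^sub>R (y - z) \<in> cone_at z x y"
proof -
  have p1: "z + (2 * \<alpha>) *\<^sub>R (x - z) \<in> convex hull (halfline z x \<union> halfline z y)"
    using assms by (intro subsetD[OF hull_subset]) (auto simp: halfline_def)
  have p2: "z + (2 * \<beta>) *\<^sub>R (y - z) \<in> convex hull (halfline z x \<union> halfline z y)"
    using assms by (intro subsetD[OF hull_subset]) (auto simp: halfline_def)
  have "(1/2) *\<^sub>R (z + (2 * \<alpha>) *\<^sub>R (x - z)) + (1/2) *\<^sub>R (z + (2 * \<beta>) *\<^sub>R (y - z))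
        \<in> convex hull (halfline z x \<union> halfline z y)"
    using convexD[OF convex_convex_hull p1 p2, of "1/2" "1/2"] by simp
  moreover have "(1/2) *\<^sub>R (z + (2 * \<alpha>) *\<^sub>R (x - z)) + (1/2) *\<^sub>R (z + (2 * \<beta>) *\<^sub>R (y - z))
        = z + \<alpha> *\<^sub>R (x - z) + \<beta> *\<^sub>R (y - z)"
  proof -
    have "(1/2) *\<^sub>R z + (1/2) *\<^sub>R z = z" by (metis scaleR_add_left field_sum_of_halves scaleR_one)
    then show ?thesis by (simp add: scaleR_right_distrib algebra_simps)
  qed
  ultimately show ?thesis unfolding cone_at_def by simp
qed

lemma cone_sub:
  fixes x y z :: "'a::real_vector"
  assumes "w \<in> cone_at z x y"
  shows "\<exists>\<alpha> \<beta>. \<alpha> \<ge> 0 \<and> \<beta> \<ge> 0 \<and> w = z + \<alpha> *\<^sub>R (x - z) + \<beta> *\<^sub>R (y - z)"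
proof -
  define K where "K = {z + \<alpha> *\<^sub>R (x - z) + \<beta> *\<^sub>R (y - z) | \<alpha> \<beta>. \<alpha> \<ge> 0 \<and> \<beta> \<ge> 0}"
  have "halfline z x \<union> halfline z y \<subseteq> K"
    unfolding K_def halfline_def by force
  moreover have "convex K"
    unfolding convex_def K_def
  proof (clarify)
    fix u v a1 b1 a2 b2 :: real
    assume h: "0 \<le> u" "0 \<le> v" "u + v = 1" "0 \<le> a1" "0 \<le> b1" "0 \<le> a2" "0 \<le> b2"
    show "\<exists>\<alpha> \<beta>. u *\<^sub>R (z + a1 *\<^sub>R (x - z) + b1 *\<^sub>R (y - z)) + v *\<^sub>R (z + a2 *\<^sub>R (x - z) + b2 *\<^sub>R (y - z))
               = z + \<alpha> *\<^sub>R (x - z) + \<beta> *\<^sub>R (y - z) \<and> 0 \<le> \<alpha> \<and> 0 \<le> \<beta>"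
    proof (intro exI conjI)
      have "u *\<^sub>R z + v *\<^sub>R z = z" using h(3) by (metis scaleR_add_left scaleR_one)
      then show "u *\<^sub>R (z + a1 *\<^sub>R (x - z) + b1 *\<^sub>R (y - z)) + v *\<^sub>R (z + a2 *\<^sub>R (x - z) + b2 *\<^sub>R (y - z))
               = z + (u * a1 + v * a2) *\<^sub>R (x - z) + (u * b1 + v * b2) *\<^sub>R (y - z)"
        by (simp add: algebra_simps)
      show "0 \<le> u * a1 + v * a2" using h by simp
      show "0 \<le> u * b1 + v * b2" using h by simp
    qed
  qed
  ultimately have "cone_at z x y \<subseteq> K" unfolding cone_at_def by (rule hull_minimal)
  with assms show ?thesis unfolding K_def by blast
qed


lemma lin_sub:
  fixes z e1 e2 :: "'a::real_vector"
  assumes "z + \<alpha> *\<^sub>R e1 + \<beta> *\<^sub>R e2 = z + \<gamma> *\<^sub>R e1 + \<delta> *\<^sub>R e2"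
  shows "(\<alpha> - \<gamma>) *\<^sub>R e1 + (\<beta> - \<delta>) *\<^sub>R e2 = 0"
proof -
  have "(\<alpha> - \<gamma>) *\<^sub>R e1 + (\<beta> - \<delta>) *\<^sub>R e2 = (z + \<alpha> *\<^sub>R e1 + \<beta> *\<^sub>R e2) - (z + \<gamma> *\<^sub>R e1 + \<delta> *\<^sub>R e2)"
    by (simp add: algebra_simps)
  then show ?thesis using assms by simp
qed

lemma refl_lin:
  fixes z e1 e2 :: "'a::real_vector"
  shows "2 *\<^sub>R z - (z + \<alpha> *\<^sub>R e1 + \<beta> *\<^sub>R e2) = z + (- \<alpha>) *\<^sub>R e1 + (- \<beta>) *\<^sub>R e2"
  by (simp add: algebra_simps scaleR_2)

lemma half_lin:
  fixes z x y :: "'a::real_vector"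
  shows "z + (1/2) *\<^sub>R (y - x) = z + (- 1/2) *\<^sub>R (x - z) + (1/2) *\<^sub>R (y - z)"
proof -
  have "(- 1/2) *\<^sub>R (x - z) + (1/2) *\<^sub>R (y - z) = (1/2) *\<^sub>R ((y - z) - (x - z))"
    by (simp add: algebra_simps)
  then show ?thesis by (simp add: add.assoc)
qed

lemma Pdiff:
  fixes a b :: "'a::real_vector"
  shows "((1 - l) *\<^sub>R a + l *\<^sub>R b) - ((1 - m) *\<^sub>R a + m *\<^sub>R b) = (l - m) *\<^sub>R (b - a)"
  by (simp add: algebra_simps)

lemma sub_lin:
  fixes p q :: "'a::real_vector"
  shows "c *\<^sub>R p - c *\<^sub>R (p - q) = c *\<^sub>R q"
  by (simp add: algebra_simps)

lemma construct:
  fixes x y a b :: "'a::real_normed_vector"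
  assumes xy: "x \<noteq> y" and ab: "a \<noteq> b" and seg: "closed_segment a b \<subseteq> unit_circle"
    and d: "y - x = t *\<^sub>R (b - a)" and t0: "t > 0"
  shows "\<exists>z \<in> bis x y - closed_segment x y.
           \<not> (bis x y \<subseteq> cone_at z x y \<union> (\<lambda>v. 2 *\<^sub>R z - v) ` cone_at z x y)"
proof -
  define P where "P = (\<lambda>l::real. (1 - l) *\<^sub>R a + l *\<^sub>R b)"
  have n1: "norm (P l) = 1" if "0 \<le> l" "l \<le> 1" for l
    using seg that unfolding P_def closed_segment_def unit_circle_def by blast
  have Pd: "P l - P m = (l - m) *\<^sub>R (b - a)" for l m
    unfolding P_def by (rule Pdiff)
  have na: "norm a = 1" using n1[of 0] unfolding P_def by simp
  have nb: "norm b = 1" using n1[of 1] unfolding P_def by simp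
  define z where "z = x + (2 * t) *\<^sub>R P (3/4)"
  define v where "v = x + (2 * t) *\<^sub>R P 1"
  have d1: "y - x = (2 * t) *\<^sub>R (P (3/4) - P (1/4))" using d Pd[of "3/4" "1/4"] by simp
  have d2: "y - x = (2 * t) *\<^sub>R (P 1 - P (1/2))" using d Pd[of 1 "1/2"] by simp
  have zx: "z - x = (2 * t) *\<^sub>R P (3/4)" unfolding z_def by simp
  have "z - y = (z - x) - (y - x)" by simp
  also have "\<dots> = (2 * t) *\<^sub>R P (1/4)" unfolding zx d1 by (rule sub_lin)
  finally have zy: "z - y = (2 * t) *\<^sub>R P (1/4)" .
  have vx: "v - x = (2 * t) *\<^sub>R P 1" unfolding v_def by simp
  have "v - y = (v - x) - (y - x)" by simp
  also have "\<dots> = (2 * t) *\<^sub>R P (1/2)" unfolding vx d2 by (rule sub_lin)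
  finally have vy: "v - y = (2 * t) *\<^sub>R P (1/2)" .
  have "v - z = (2 * t) *\<^sub>R (P 1 - P (3/4))" unfolding v_def z_def by (simp add: algebra_simps)
  also have "\<dots> = (1/2) *\<^sub>R (y - x)" using Pd[of 1 "3/4"] d by simp
  finally have vz0: "v - z = (1/2) *\<^sub>R (y - x)" .
  have vz: "v = z + (- 1/2) *\<^sub>R (x - z) + (1/2) *\<^sub>R (y - z)"
  proof -
    have "v = z + (1/2) *\<^sub>R (y - x)" using vz0 by (simp add: algebra_simps)
    then show ?thesis using half_lin[of z y x] by simp
  qed
  have nzx: "norm (z - x) = 2 * t" using zx n1[of "3/4"] t0 by simp
  have nzy: "norm (z - y) = 2 * t" using zy n1[of "1/4"] t0 by simp
  have zb: "z \<in> bis x y" unfolding bis_def using nzx nzy by simp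
  have vb: "v \<in> bis x y" unfolding bis_def using vx vy n1[of 1] n1[of "1/2"] t0 by simp
  have zns: "z \<notin> closed_segment x y"
  proof
    assume "z \<in> closed_segment x y"
    then have "z - x = (1/2) *\<^sub>R (y - x)" using mid2[OF xy] nzx nzy by simp
    then have "norm (z - x) = (1/2) * (t * norm (b - a))" using d t0 by simp
    moreover have "norm (b - a) \<le> 2" using norm_triangle_ineq4[of b a] na nb by simp
    ultimately have "2 * t \<le> t" using nzx t0 by (simp add: mult_left_mono)
    then show False using t0 by simp
  qed
  have zbb: "norm (z - x) = norm (z - y)" using nzx nzy by simp
  have notc: "v \<notin> cone_at z x y \<union> (\<lambda>v. 2 *\<^sub>R z - v) ` cone_at z x y"
  proof
    assume "v \<in> cone_at z x y \<union> (\<lambda>v. 2 *\<^sub>R z - v) ` cone_at z x y"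
    then show False
    proof
      assume "v \<in> cone_at z x y"
      then obtain \<alpha> \<beta> where h: "\<alpha> \<ge> 0" "\<beta> \<ge> 0" "v = z + \<alpha> *\<^sub>R (x - z) + \<beta> *\<^sub>R (y - z)"
        using cone_sub by blast
      have "(\<alpha> - (- 1/2)) *\<^sub>R (x - z) + (\<beta> - 1/2) *\<^sub>R (y - z) = 0"
        using h(3) vz by (intro lin_sub) simp
      then have "\<alpha> - (- 1/2) = 0" using indep2[OF xy zbb zns] by blast
      with h show False by simp
    next
      assume "v \<in> (\<lambda>v. 2 *\<^sub>R z - v) ` cone_at z x y"
      then obtain w where w: "w \<in> cone_at z x y" "v = 2 *\<^sub>R z - w" by blast
      then obtain \<alpha> \<beta> where h: "\<alpha> \<ge> 0" "\<beta> \<ge> 0" "w = z + \<alpha> *\<^sub>R (x - z) + \<beta> *\<^sub>R (y - z)"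
        using cone_sub by blast
      have "v = z + (- \<alpha>) *\<^sub>R (x - z) + (- \<beta>) *\<^sub>R (y - z)"
        using w(2) h(3) refl_lin by simp
      then have "((- \<alpha>) - (- 1/2)) *\<^sub>R (x - z) + ((- \<beta>) - 1/2) *\<^sub>R (y - z) = 0"
        using vz by (intro lin_sub) simp
      then have "(- \<beta>) - 1/2 = 0" using indep2[OF xy zbb zns] by blast
      with h show False by simp
    qed
  qed
  show ?thesis using zb zns vb notc by blast
qed

theorem lemma2p1:
  fixes x y :: "'a::real_normed_vector"
  assumes "dim (UNIV :: 'a set) = 2"
    and "x \<noteq> y"
  shows "(\<not> (\<exists>a b. a \<noteq> b \<and> closed_segment a b \<subseteq> unit_circle \<and> seg_parallel x y a b))
         \<longleftrightarrow> (\<forall>z \<in> bis x y - closed_segment x y.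
               bis x y \<subseteq> cone_at z x y \<union> (\<lambda>v. 2 *\<^sub>R z - v) ` cone_at z x y)"
proof
  assume nos: "\<not> (\<exists>a b. a \<noteq> b \<and> closed_segment a b \<subseteq> unit_circle \<and> seg_parallel x y a b)"
  show "\<forall>z \<in> bis x y - closed_segment x y.
               bis x y \<subseteq> cone_at z x y \<union> (\<lambda>v. 2 *\<^sub>R z - v) ` cone_at z x y"
  proof (intro ballI subsetI)
    fix z v assume zin: "z \<in> bis x y - closed_segment x y" and vin: "v \<in> bis x y"
    have zb: "norm (z - x) = norm (z - y)" and zns: "z \<notin> closed_segment x y"
      using zin unfolding bis_def by auto
    have vb: "norm (v - x) = norm (v - y)" using vin unfolding bis_def by auto
    note ind = indep2[OF assms(2) zb zns]
    have e12: "x - z \<noteq> y - z" using assms(2) by simp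
    have e20: "y - z \<noteq> 0" using zns by auto
    have nsp: "x - z \<notin> span {y - z}"
    proof
      assume "x - z \<in> span {y - z}"
      then obtain k where "x - z = k *\<^sub>R (y - z)" by (auto simp: span_singleton)
      then have "1 *\<^sub>R (x - z) + (- k) *\<^sub>R (y - z) = 0" by simp
      then show False using ind[of 1 "-k"] by simp
    qed
    have indep: "independent {x - z, y - z}"
      using e12 e20 nsp by (simp add: independent_insert dependent_single)
    have "UNIV \<subseteq> span {x - z, y - z}"
    proof
      fix w :: 'a
      show "w \<in> span {x - z, y - z}"
      proof (rule ccontr)
        assume wn: "w \<notin> span {x - z, y - z}"
        obtain B :: "'a set" where B: "independent B" "UNIV \<subseteq> span B" "card B = dim (UNIV :: 'a set)"
          using real_vector.basis_exists[of "UNIV :: 'a set"] by blast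
        have fB: "finite B" using B(3) assms(1) card.infinite by fastforce
        have wn2: "w \<notin> {x - z, y - z}" using wn real_vector.span_base by blast
        have i3: "independent (insert w {x - z, y - z})" using wn wn2 indep by (simp add: independent_insert)
        have "card (insert w {x - z, y - z}) \<le> card B"
          using real_vector.independent_span_bound[OF fB i3] B(2) by blast
        moreover have "card (insert w {x - z, y - z}) = 3" using e12 wn2 by simp
        ultimately show False using B(3) assms(1) by simp
      qed
    qed
    then have "v - z \<in> span {x - z, y - z}" by blast
    then obtain k where "v - z - k *\<^sub>R (x - z) \<in> span {y - z}" by (auto simp: span_insert)
    then obtain j where "v - z - k *\<^sub>R (x - z) = j *\<^sub>R (y - z)" by (auto simp: span_singleton)
    then have veq: "v = z + k *\<^sub>R (x - z) + j *\<^sub>R (y - z)" by (simp add: algebra_simps)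
    show "v \<in> cone_at z x y \<union> (\<lambda>v. 2 *\<^sub>R z - v) ` cone_at z x y"
    proof (cases "k \<ge> 0 \<and> j \<ge> 0")
      case True
      then show ?thesis using cone_in[of k j z x y] veq by simp
    next
      case nf: False
      show ?thesis
      proof (cases "k \<le> 0 \<and> j \<le> 0")
        case True
        then have "z + (-k) *\<^sub>R (x - z) + (-j) *\<^sub>R (y - z) \<in> cone_at z x y"
          using cone_in[of "-k" "-j" z x y] by simp
        moreover have "v = 2 *\<^sub>R z - (z + (-k) *\<^sub>R (x - z) + (-j) *\<^sub>R (y - z))"
          using veq refl_lin[of z "-k" "x - z" "-j" "y - z"] by simp
        ultimately show ?thesis by blast
      next
        case False
        with nf have "(k > 0 \<and> j < 0) \<or> (k < 0 \<and> j > 0)" by auto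
        then show ?thesis
        proof
          assume "k > 0 \<and> j < 0"
          then have "\<exists>a b. a \<noteq> b \<and> closed_segment a b \<subseteq> unit_circle \<and> seg_parallel x y a b"
            using bad[OF assms(2) zb vb veq] by blast
          with nos show ?thesis by blast
        next
          assume kj: "k < 0 \<and> j > 0"
          have veq': "v = z + j *\<^sub>R (y - z) + k *\<^sub>R (x - z)" using veq by (simp add: algebra_simps)
          obtain a b where "a \<noteq> b" "closed_segment a b \<subseteq> unit_circle" "seg_parallel y x a b"
            using bad[OF assms(2)[symmetric] zb[symmetric] vb[symmetric] veq'] kj by blast
          then have "\<exists>a b. a \<noteq> b \<and> closed_segment a b \<subseteq> unit_circle \<and> seg_parallel x y a b"
            unfolding seg_parallel_def
            by (metis minus_diff_eq scaleR_minus_left)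
          with nos show ?thesis by blast
        qed
      qed
    qed
  qed
next
  assume R: "\<forall>z \<in> bis x y - closed_segment x y.
               bis x y \<subseteq> cone_at z x y \<union> (\<lambda>v. 2 *\<^sub>R z - v) ` cone_at z x y"
  show "\<not> (\<exists>a b. a \<noteq> b \<and> closed_segment a b \<subseteq> unit_circle \<and> seg_parallel x y a b)"
  proof
    assume "\<exists>a b. a \<noteq> b \<and> closed_segment a b \<subseteq> unit_circle \<and> seg_parallel x y a b"
    then obtain a b t where ab: "a \<noteq> b" "closed_segment a b \<subseteq> unit_circle" "y - x = t *\<^sub>R (b - a)"
      unfolding seg_parallel_def by blast
    have "t \<noteq> 0" using ab(3) assms(2) by auto
    then consider "t > 0" | "t < 0" by linarith
    then show False
    proof cases
      case 1
      then show False using construct[OF assms(2) ab(1) ab(2) ab(3)] R by blast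
    next
      case 2
      have e1: "y - x = (- t) *\<^sub>R (a - b)" using ab(3) by (simp add: algebra_simps)
      have e2: "closed_segment b a \<subseteq> unit_circle" using ab(2) by (simp add: closed_segment_commute)
      have "- t > 0" using 2 by simp
      from construct[OF assms(2) ab(1)[symmetric] e2 e1 this] R show False by blast
    qed
  qed
qed

end
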